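(* Consider the execution of Greedy Dual on any MPMD or MBPMD instance. For any request $u$ and any time $\tau\ge\mathrm{atime}(u)$, $$\sum_{S:\,u\in S} y_S(\tau)\le \tau-\mathrm{atime}(u),$$ and equality holds if $u$ is still free (unmatched) at time $\tau$.
   Context: Problem (MPMD / MBPMD). Let $(\mathcal{X},\mathrm{dist})$ be a metric space. An instance consists of $2m$ requests $u_1,\dots,u_{2m}$. Each request $u$ is a triple $(\mathrm{pos}(u),\mathrm{atime}(u),\mathrm{sgn}(u))$, where $\mathrm{pos}(u)\in\mathcal{X}$ is its location and $\mathrm{atime}(u)\ge0$ is its arrival time, with arrival times nondecreasing. In MPMD, $\mathrm{sgn}(u)=0$ for all requests. In MBPMD, exactly $m$ requests have sign $+1$ and $m$ have sign $-1$. At time $\tau$, an algorithm may match two arrived, unmatched requests $u,v$ with $\mathrm{sgn}(u)=-\mathrm{sgn}(v)$, at cost $\mathrm{dist}(\mathrm{pos}(u),\mathrm{pos}(v))$ (connection cost) plus $(\tau-\mathrm{atime}(u))+(\tau-\mathrm{atime}(v))$ (waiting costs). All requests must eventually be matched. Notation. Edges are unordered pairs $\{u,v\}$ of distinct requests with $\mathrm{sgn}(u)=-\mathrm{sgn}(v)$. For a set $S$ of requests, $\delta(S)$ is the set of edges with exactly one endpoint in $S$. In MPMD, $\mathrm{sur}(S)=|S|\bmod 2$; in MBPMD, $\mathrm{sur}(S)=|\sum_{u\in S}\mathrm{sgn}(u)|$. For an edge $e=(u,v)$, $\mathrm{cost}(e)=\mathrm{dist}(\mathrm{pos}(u),\mathrm{pos}(v))+|\mathrm{atime}(u)-\mathrm{atime}(v)|$.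 Algorithm Greedy Dual (GD). GD maintains a dual variable $y_S\ge0$ for every set $S$ of already-arrived requests; $y_S(\tau)$ denotes its value at time $\tau$. It also maintains a partition of the arrived requests into active sets, with $\mathcal{A}(u)$ denoting the active set containing $u$. An active set is growing if it contains at least one free request, and non-growing otherwise. - When a request $u$ arrives, $\mathcal{A}(u)\leftarrow\{u\}$ becomes a new active set, and $y_S\leftarrow 0$ for every new set $S$ containing $u$. - Tight-constraint event: while there is an edge $e=(u,v)$ between arrived requests with $\mathcal{A}(u)\neq\mathcal{A}(v)$ and $\sum_{S:\,e\in\delta(S)}y_S=\mathrm{cost}(e)$, GD does the following. It merges the two sets: $S=\mathcal{A}(u)\cup\mathcal{A}(v)$ becomes active and $\mathcal{A}(w)\leftarrow S$ for all $w\in S$, while $\mathcal{A}(u)$ and $\mathcal{A}(v)$ become inactive. It marks the edge $e$. Then, while there are free $u',v'\in S$ with $\mathrm{sgn}(u')=-\mathrm{sgn}(v')$, it matches $u'$ with $v'$ at the current time. - At all other times, $y_S$ increases continuously at rate $1$ (the same rate as time) for every active growing set $S$; all other dual variables stay constant. *)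

theory Defs
  imports Complex_Main
begin

definition is_MPMD :: "nat \<Rightarrow> (nat \<Rightarrow> int) \<Rightarrow> bool" where
  "is_MPMD m sg \<longleftrightarrow> (\<forall>i<2*m. sg i = 0)"

definition is_MBPMD :: "nat \<Rightarrow> (nat \<Rightarrow> int) \<Rightarrow> bool" where
  "is_MBPMD m sg \<longleftrightarrow> (\<forall>i<2*m. sg i = 1 \<or> sg i = -1)
      \<and> card {i. i < 2*m \<and> sg i = 1} = m \<and> card {i. i < 2*m \<and> sg i = -1} = m"

definition valid_instance ::
  "nat \<Rightarrow> (nat \<Rightarrow> 'a::metric_space) \<Rightarrow> (nat \<Rightarrow> real) \<Rightarrow> (nat \<Rightarrow> int) \<Rightarrow> bool" where
  "valid_instance m pos atm sg \<longleftrightarrow>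
     (\<forall>i<2*m. 0 \<le> atm i) \<and> (\<forall>i j. i \<le> j \<and> j < 2*m \<longrightarrow> atm i \<le> atm j)
     \<and> (is_MPMD m sg \<or> is_MBPMD m sg)"

definition is_edge :: "(nat \<Rightarrow> int) \<Rightarrow> nat \<Rightarrow> nat \<Rightarrow> bool" where
  "is_edge sg u v \<longleftrightarrow> u \<noteq> v \<and> sg u = - sg v"

definition edge_cost ::
  "(nat \<Rightarrow> 'a::metric_space) \<Rightarrow> (nat \<Rightarrow> real) \<Rightarrow> nat \<Rightarrow> nat \<Rightarrow> real" where
  "edge_cost pos atm u v = dist (pos u) (pos v) + \<bar>atm u - atm v\<bar>"

text \<open>Configuration of Greedy Dual: current time, arrived requests, active sets,
  dual variables (for every set of requests), matched pairs, marked edges.\<close>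
record gd_cfg =
  time :: real
  arr :: "nat set"
  act :: "nat set set"
  yv :: "nat set \<Rightarrow> real"
  mt :: "(nat \<times> nat) set"
  mk :: "(nat \<times> nat) set"

definition matched :: "gd_cfg \<Rightarrow> nat set" where
  "matched c = fst ` mt c \<union> snd ` mt c"

definition free :: "gd_cfg \<Rightarrow> nat set" where
  "free c = arr c - matched c"

text \<open>Sum of y_S over the sets S of arrived requests with e = {u,v} in delta(S).\<close>
definition dual_load :: "gd_cfg \<Rightarrow> nat \<Rightarrow> nat \<Rightarrow> real" where
  "dual_load c u v = (\<Sum>S\<in>{S. S \<subseteq> arr c \<and> ((u \<in> S) \<noteq> (v \<in> S))}. yv c S)"

definition tight ::
  "(nat \<Rightarrow> 'a::metric_space) \<Rightarrow> (nat \<Rightarrow> real) \<Rightarrow> (nat \<Rightarrow> int) \<Rightarrow> gd_cfg \<Rightarrow> nat \<Rightarrow> nat \<Rightarrow> bool" where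
  "tight pos atm sg c u v \<longleftrightarrow> u \<in> arr c \<and> v \<in> arr c \<and> is_edge sg u v
     \<and> (\<exists>S1\<in>act c. \<exists>S2\<in>act c. u \<in> S1 \<and> v \<in> S2 \<and> S1 \<noteq> S2)
     \<and> dual_load c u v = edge_cost pos atm u v"

definition grown :: "gd_cfg \<Rightarrow> real \<Rightarrow> nat set \<Rightarrow> real" where
  "grown c d S = yv c S + (if S \<in> act c \<and> S \<inter> free c \<noteq> {} then d else 0)"

definition matching_loop :: "(nat \<Rightarrow> int) \<Rightarrow> gd_cfg \<Rightarrow> nat set \<Rightarrow> (nat \<times> nat) set \<Rightarrow> bool" where
  "matching_loop sg c S P \<longleftrightarrow>
     (\<forall>(a,b)\<in>P. a \<in> S \<inter> free c \<and> b \<in> S \<inter> free c \<and> is_edge sg a b)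
     \<and> (\<forall>(a,b)\<in>P. \<forall>(a',b')\<in>P. (a,b) \<noteq> (a',b') \<longrightarrow> {a,b} \<inter> {a',b'} = {})
     \<and> (\<forall>a b. a \<in> S \<inter> free c - (fst ` P \<union> snd ` P) \<longrightarrow> b \<in> S \<inter> free c - (fst ` P \<union> snd ` P)
              \<longrightarrow> \<not> is_edge sg a b)"

definition gd_init :: gd_cfg where
  "gd_init = \<lparr>time = 0, arr = {}, act = {}, yv = (\<lambda>_. 0), mt = {}, mk = {}\<rparr>"

inductive gd_step ::
  "nat \<Rightarrow> (nat \<Rightarrow> 'a::metric_space) \<Rightarrow> (nat \<Rightarrow> real) \<Rightarrow> (nat \<Rightarrow> int) \<Rightarrow> gd_cfg \<Rightarrow> gd_cfg \<Rightarrow> bool"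
  for m pos atm sg where
  arrive: "\<lbrakk>u < 2*m; u \<notin> arr c; atm u = time c\<rbrakk> \<Longrightarrow>
     gd_step m pos atm sg c
       (c\<lparr>arr := insert u (arr c), act := insert {u} (act c),
          yv := (\<lambda>S. if u \<in> S then 0 else yv c S)\<rparr>)"
| merge: "\<lbrakk>tight pos atm sg c u v; S1 \<in> act c; S2 \<in> act c; u \<in> S1; v \<in> S2; S1 \<noteq> S2;
           matching_loop sg c (S1 \<union> S2) P\<rbrakk> \<Longrightarrow>
     gd_step m pos atm sg c
       (c\<lparr>act := insert (S1 \<union> S2) (act c - {S1, S2}), mk := insert (u,v) (mk c),
          mt := mt c \<union> P\<rparr>)"
| wait: "\<lbrakk>0 < d; \<forall>u<2*m. u \<notin> arr c \<longrightarrow> time c + d \<le> atm u;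
          \<forall>s. 0 \<le> s \<and> s < d \<longrightarrow> (\<forall>u v. \<not> tight pos atm sg (c\<lparr>yv := grown c s\<rparr>) u v)\<rbrakk> \<Longrightarrow>
     gd_step m pos atm sg c (c\<lparr>time := time c + d, yv := grown c d\<rparr>)"

end

theory Submission
  imports Defs
begin

definition F :: "gd_cfg \<Rightarrow> nat \<Rightarrow> real" where
  "F c v = (\<Sum>S\<in>{S. S \<subseteq> arr c \<and> v \<in> S}. yv c S)"

definition inv :: "nat \<Rightarrow> (nat \<Rightarrow> real) \<Rightarrow> gd_cfg \<Rightarrow> bool" where
  "inv m atm c \<longleftrightarrow> arr c \<subseteq> {..<2*m} \<and> (\<forall>S\<in>act c. S \<subseteq> arr c)
    \<and> (\<forall>v\<in>arr c. \<exists>!S. S \<in> act c \<and> v \<in> S)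
    \<and> (\<forall>v<2*m. v \<notin> arr c \<longrightarrow> time c \<le> atm v)
    \<and> (\<forall>v\<in>arr c. atm v \<le> time c)
    \<and> matched c \<subseteq> arr c
    \<and> (\<forall>v\<in>arr c. F c v \<le> time c - atm v \<and> (v \<notin> matched c \<longrightarrow> F c v = time c - atm v))"

lemma invD1: "inv m atm c \<Longrightarrow> arr c \<subseteq> {..<2*m}" unfolding inv_def by (elim conjE)
lemma invD2: "inv m atm c \<Longrightarrow> \<forall>S\<in>act c. S \<subseteq> arr c" unfolding inv_def by (elim conjE)
lemma invD3: "inv m atm c \<Longrightarrow> \<forall>v\<in>arr c. \<exists>!S. S \<in> act c \<and> v \<in> S" unfolding inv_def by (elim conjE)
lemma invD4: "inv m atm c \<Longrightarrow> \<forall>v<2*m. v \<notin> arr c \<longrightarrow> time c \<le> atm v" unfolding inv_def by (elim conjE)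
lemma invD5: "inv m atm c \<Longrightarrow> \<forall>v\<in>arr c. atm v \<le> time c" unfolding inv_def by (elim conjE)
lemma invD6: "inv m atm c \<Longrightarrow> matched c \<subseteq> arr c" unfolding inv_def by (elim conjE)
lemma invD7: "inv m atm c \<Longrightarrow> \<forall>v\<in>arr c. F c v \<le> time c - atm v \<and> (v \<notin> matched c \<longrightarrow> F c v = time c - atm v)" unfolding inv_def by (elim conjE)
lemma invI: "arr c \<subseteq> {..<2*m} \<Longrightarrow> \<forall>S\<in>act c. S \<subseteq> arr c \<Longrightarrow> \<forall>v\<in>arr c. \<exists>!S. S \<in> act c \<and> v \<in> S
  \<Longrightarrow> \<forall>v<2*m. v \<notin> arr c \<longrightarrow> time c \<le> atm v \<Longrightarrow> \<forall>v\<in>arr c. atm v \<le> time c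
  \<Longrightarrow> matched c \<subseteq> arr c \<Longrightarrow> \<forall>v\<in>arr c. F c v \<le> time c - atm v \<and> (v \<notin> matched c \<longrightarrow> F c v = time c - atm v)
  \<Longrightarrow> inv m atm c" unfolding inv_def by (intro conjI)

lemma fin_sets: "finite A \<Longrightarrow> finite {S. S \<subseteq> A \<and> v \<in> S}"
  by (rule finite_subset[of _ "Pow A"]) auto

lemma arrive_sum:
  assumes "u \<notin> A" "finite A"
  shows "(\<Sum>S\<in>{S. S \<subseteq> insert u A \<and> v \<in> S}. (if u \<in> S then 0 else f S))
       = (\<Sum>S\<in>{S. S \<subseteq> A \<and> v \<in> S}. (f S :: real))"
proof -
  have fin: "finite {S. S \<subseteq> insert u A \<and> v \<in> S}" using assms by (intro fin_sets) auto
  have "(\<Sum>S\<in>{S. S \<subseteq> insert u A \<and> v \<in> S}. (if u \<in> S then 0 else f S))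
     = (\<Sum>S\<in>{S. S \<subseteq> insert u A \<and> v \<in> S} \<inter> {S. u \<notin> S}. f S)"
    unfolding sum.inter_restrict[OF fin, of f "{S. u \<notin> S}"] by (rule sum.cong) auto
  also have "{S. S \<subseteq> insert u A \<and> v \<in> S} \<inter> {S. u \<notin> S} = {S. S \<subseteq> A \<and> v \<in> S}"
    using assms by auto
  finally show ?thesis .
qed

lemma wait_sum:
  assumes fin: "finite A" and uniq: "\<exists>!S. S \<in> K \<and> v \<in> S" and sub: "\<forall>S\<in>K. S \<subseteq> A"
    and d: "0 < (d::real)"
  shows "(\<Sum>S\<in>{S. S \<subseteq> A \<and> v \<in> S}. (if S \<in> K \<and> g S then d else 0)) \<le> d
    \<and> ((\<forall>S. S \<in> K \<and> v \<in> S \<longrightarrow> g S) \<longrightarrow>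
       (\<Sum>S\<in>{S. S \<subseteq> A \<and> v \<in> S}. (if S \<in> K \<and> g S then d else 0)) = d)"
proof -
  obtain T where T: "T \<in> K" "v \<in> T" and Tu: "\<And>S. S \<in> K \<Longrightarrow> v \<in> S \<Longrightarrow> S = T" using uniq by blast
  have fs: "finite {S. S \<subseteq> A \<and> v \<in> S}" using fin by (rule fin_sets)
  have s: "{S. S \<subseteq> A \<and> v \<in> S} \<inter> {S. S \<in> K \<and> g S} = (if g T then {T} else {})"
  proof (cases "g T")
    case True
    show ?thesis
    proof (rule set_eqI)
      fix S show "S \<in> {S. S \<subseteq> A \<and> v \<in> S} \<inter> {S. S \<in> K \<and> g S} \<longleftrightarrow> S \<in> (if g T then {T} else {})"
        using True T Tu[of S] sub by auto
    qed
  next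
    case False
    show ?thesis
    proof (rule set_eqI)
      fix S show "S \<in> {S. S \<subseteq> A \<and> v \<in> S} \<inter> {S. S \<in> K \<and> g S} \<longleftrightarrow> S \<in> (if g T then {T} else {})"
        using False T Tu[of S] sub by auto
    qed
  qed
  have eq: "(\<Sum>S\<in>{S. S \<subseteq> A \<and> v \<in> S}. (if S \<in> K \<and> g S then d else 0))
      = (\<Sum>S\<in>(if g T then {T} else {}). d)"
    using sum.inter_restrict[OF fs, of "\<lambda>_. d" "{S. S \<in> K \<and> g S}"] s by (simp del: sum_constant)
  have a: "(\<Sum>S\<in>(if g T then {T} else {}). d) \<le> d" using d by simp
  have b: "(\<forall>S. S \<in> K \<and> v \<in> S \<longrightarrow> g S) \<longrightarrow> (\<Sum>S\<in>(if g T then {T} else {}). d) = d"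
    using T by simp
  show ?thesis unfolding eq using a b by blast
qed

lemma inv_init: "\<forall>v<2*m. 0 \<le> atm v \<Longrightarrow> inv m atm gd_init"
  by (simp add: inv_def gd_init_def matched_def F_def)

lemma inv_step:
  assumes st: "gd_step m pos atm sg c c'" and I: "inv m atm c"
  shows "inv m atm c'"
  using st
proof cases
  case (arrive u)
  have fin: "finite (arr c)" using invD1[OF I] by (rule finite_subset) simp
  have ma: "matched c' = matched c" using arrive by (simp add: matched_def)
  have Fo: "F c' v = F c v" if "v \<in> arr c" for v
  proof -
    have "F c' v = (\<Sum>S\<in>{S. S \<subseteq> insert u (arr c) \<and> v \<in> S}. (if u \<in> S then 0 else yv c S))"
      unfolding F_def arrive(1) by simp
    also have "\<dots> = F c v" unfolding F_def by (rule arrive_sum[OF arrive(3) fin])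
    finally show ?thesis .
  qed
  have Fu: "F c' u = 0" using arrive(1) by (simp add: F_def)
  note i1 = invD1[OF I] and i2 = invD2[OF I] and i3 = invD3[OF I] and i4 = invD4[OF I]
    and i5 = invD5[OF I] and i6 = invD6[OF I] and i7 = invD7[OF I]
  have a1: "arr c' = insert u (arr c)" "act c' = insert {u} (act c)" "time c' = time c"
    using arrive(1) by simp_all
  have j1: "arr c' \<subseteq> {..<2*m}" using i1 arrive(2) a1 by auto
  have j2: "\<forall>S\<in>act c'. S \<subseteq> arr c'" using i2 a1 by auto
  have j3: "\<forall>v\<in>arr c'. \<exists>!S. S \<in> act c' \<and> v \<in> S"
  proof
    fix v assume v: "v \<in> arr c'"
    show "\<exists>!S. S \<in> act c' \<and> v \<in> S"
    proof (cases "v = u")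
      case True
      show ?thesis unfolding a1 True
      proof (rule ex1I[of _ "{u}"])
        show "{u} \<in> insert {u} (act c) \<and> u \<in> {u}" by simp
      next
        fix S assume S: "S \<in> insert {u} (act c) \<and> u \<in> S"
        have "S \<notin> act c" using S i2 arrive(3) by blast
        then show "S = {u}" using S by simp
      qed
    next
      case False
      then have "v \<in> arr c" using v a1 by simp
      then obtain T where T: "T \<in> act c" "v \<in> T" "\<And>S. S \<in> act c \<Longrightarrow> v \<in> S \<Longrightarrow> S = T"
        using i3 by blast
      show ?thesis unfolding a1
      proof (rule ex1I[of _ T])
        show "T \<in> insert {u} (act c) \<and> v \<in> T" using T(1,2) by simp
      next
        fix S assume S: "S \<in> insert {u} (act c) \<and> v \<in> S"
        then have "S \<in> act c" using False by auto
        then show "S = T" using T(3) S by blast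
      qed
    qed
  qed
  have j4: "\<forall>v<2*m. v \<notin> arr c' \<longrightarrow> time c' \<le> atm v" using i4 a1 by simp
  have j5: "\<forall>v\<in>arr c'. atm v \<le> time c'" using i5 a1 arrive(4) by simp
  have j6: "matched c' \<subseteq> arr c'" using i6 ma a1 by auto
  have j7: "\<forall>v\<in>arr c'. F c' v \<le> time c' - atm v \<and> (v \<notin> matched c' \<longrightarrow> F c' v = time c' - atm v)"
  proof
    fix v assume v: "v \<in> arr c'"
    show "F c' v \<le> time c' - atm v \<and> (v \<notin> matched c' \<longrightarrow> F c' v = time c' - atm v)"
    proof (cases "v = u")
      case True
      then show ?thesis using Fu a1 arrive(4) by simp
    next
      case False
      then have "v \<in> arr c" using v a1 by simp
      then show ?thesis using i7 Fo[of v] a1 ma by simp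
    qed
  qed
  show ?thesis by (rule invI[OF j1 j2 j3 j4 j5 j6 j7])
next
  case (merge u v S1 S2 P)
  note i1 = invD1[OF I] and i2 = invD2[OF I] and i3 = invD3[OF I] and i4 = invD4[OF I]
    and i5 = invD5[OF I] and i6 = invD6[OF I] and i7 = invD7[OF I]
  have a1: "arr c' = arr c" "act c' = insert (S1 \<union> S2) (act c - {S1, S2})" "time c' = time c"
    "yv c' = yv c" using merge(1) by simp_all
  have Fo: "F c' w = F c w" for w unfolding F_def a1 ..
  have ma: "matched c' = matched c \<union> (fst ` P \<union> snd ` P)" using merge(1) by (auto simp add: matched_def)
  have Psub: "fst ` P \<union> snd ` P \<subseteq> arr c"
  proof -
    have "\<forall>(a,b)\<in>P. a \<in> free c \<and> b \<in> free c"
      using merge(8) unfolding matching_loop_def by blast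
    then show ?thesis unfolding free_def by force
  qed
  have j3: "\<forall>w\<in>arr c'. \<exists>!S. S \<in> act c' \<and> w \<in> S"
  proof
    fix w assume "w \<in> arr c'"
    then have w: "w \<in> arr c" using a1 by simp
    obtain T where T: "T \<in> act c" "w \<in> T" and Tu: "\<And>S. S \<in> act c \<Longrightarrow> w \<in> S \<Longrightarrow> S = T"
      using i3 w by blast
    show "\<exists>!S. S \<in> act c' \<and> w \<in> S" unfolding a1
    proof (cases "T = S1 \<or> T = S2")
      case True
      show "\<exists>!S. S \<in> insert (S1 \<union> S2) (act c - {S1, S2}) \<and> w \<in> S"
      proof (rule ex1I[of _ "S1 \<union> S2"])
        show "S1 \<union> S2 \<in> insert (S1 \<union> S2) (act c - {S1, S2}) \<and> w \<in> S1 \<union> S2" using True T by auto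
      next
        fix S assume S: "S \<in> insert (S1 \<union> S2) (act c - {S1, S2}) \<and> w \<in> S"
        show "S = S1 \<union> S2"
        proof (rule ccontr)
          assume "S \<noteq> S1 \<union> S2"
          then have "S \<in> act c" "S \<noteq> S1" "S \<noteq> S2" using S by auto
          then show False using Tu[of S] S True by blast
        qed
      qed
    next
      case False
      note nT = False
      show "\<exists>!S. S \<in> insert (S1 \<union> S2) (act c - {S1, S2}) \<and> w \<in> S"
      proof (rule ex1I[of _ T])
        show "T \<in> insert (S1 \<union> S2) (act c - {S1, S2}) \<and> w \<in> T" using False T by auto
      next
        fix S assume S: "S \<in> insert (S1 \<union> S2) (act c - {S1, S2}) \<and> w \<in> S"
        show "S = T"
        proof (cases "S = S1 \<union> S2")
          case True
          then have "w \<in> S1 \<or> w \<in> S2" using S by blast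
          then show ?thesis using Tu merge(3,4) nT by blast
        next
          case False
          then have "S \<in> act c" using S by blast
          then show ?thesis using Tu S by blast
        qed
      qed
    qed
  qed
  have j1: "arr c' \<subseteq> {..<2*m}" using i1 a1 by simp
  have j2: "\<forall>S\<in>act c'. S \<subseteq> arr c'" using i2 a1 merge(3,4) by auto
  have j4: "\<forall>v<2*m. v \<notin> arr c' \<longrightarrow> time c' \<le> atm v" using i4 a1 by simp
  have j5: "\<forall>v\<in>arr c'. atm v \<le> time c'" using i5 a1 by simp
  have j6: "matched c' \<subseteq> arr c'" using i6 ma a1 Psub by simp
  have j7: "\<forall>v\<in>arr c'. F c' v \<le> time c' - atm v \<and> (v \<notin> matched c' \<longrightarrow> F c' v = time c' - atm v)"
    using i7 a1 Fo ma by simp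
  show ?thesis by (rule invI[OF j1 j2 j3 j4 j5 j6 j7])
next
  case (wait d)
  note i1 = invD1[OF I] and i2 = invD2[OF I] and i3 = invD3[OF I] and i4 = invD4[OF I]
    and i5 = invD5[OF I] and i6 = invD6[OF I] and i7 = invD7[OF I]
  have fin: "finite (arr c)" using i1 by (rule finite_subset) simp
  have a1: "arr c' = arr c" "act c' = act c" "time c' = time c + d"
    "yv c' = grown c d" "matched c' = matched c" using wait(1) by (simp_all add: matched_def)
  have Fn: "F c' w \<le> F c w + d \<and> (w \<notin> matched c \<longrightarrow> F c' w = F c w + d)" if w: "w \<in> arr c" for w
  proof -
    have u1: "\<exists>!S. S \<in> act c \<and> w \<in> S" using i3 w by blast
    note ws = wait_sum[OF fin u1 i2 wait(2), of "\<lambda>S. S \<inter> free c \<noteq> {}"]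
    have "F c' w = F c w + (\<Sum>S\<in>{S. S \<subseteq> arr c \<and> w \<in> S}. (if S \<in> act c \<and> S \<inter> free c \<noteq> {} then d else 0))"
      unfolding F_def a1 grown_def by (rule sum.distrib)
    moreover have "w \<notin> matched c \<Longrightarrow> w \<in> free c" using w by (simp add: free_def)
    ultimately show ?thesis using ws by auto
  qed
  have j1: "arr c' \<subseteq> {..<2*m}" using i1 a1 by simp
  have j2: "\<forall>S\<in>act c'. S \<subseteq> arr c'" using i2 a1 by simp
  have j3: "\<forall>v\<in>arr c'. \<exists>!S. S \<in> act c' \<and> v \<in> S" using i3 a1 by simp
  have j4: "\<forall>v<2*m. v \<notin> arr c' \<longrightarrow> time c' \<le> atm v" using wait(3) a1 by simp
  have j5: "\<forall>v\<in>arr c'. atm v \<le> time c'" using i5 a1 wait(2) by force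
  have j6: "matched c' \<subseteq> arr c'" using i6 a1 by simp
  have j7: "\<forall>v\<in>arr c'. F c' v \<le> time c' - atm v \<and> (v \<notin> matched c' \<longrightarrow> F c' v = time c' - atm v)"
  proof
    fix v assume "v \<in> arr c'"
    then have v: "v \<in> arr c" using a1 by simp
    show "F c' v \<le> time c' - atm v \<and> (v \<notin> matched c' \<longrightarrow> F c' v = time c' - atm v)"
      using i7 v Fn[OF v] a1 by fastforce
  qed
  show ?thesis by (rule invI[OF j1 j2 j3 j4 j5 j6 j7])
qed

lemma inv_reach:
  assumes "(gd_step m pos atm sg)\<^sup>*\<^sup>* gd_init c" "\<forall>v<2*m. 0 \<le> atm v" shows "inv m atm c"
  using assms by (induction rule: rtranclp_induct) (auto intro: inv_init inv_step)

theorem lemma2: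
  fixes m :: nat and pos :: "nat \<Rightarrow> 'a::metric_space" and atm :: "nat \<Rightarrow> real"
    and sg :: "nat \<Rightarrow> int" and c :: gd_cfg and u :: nat
  assumes "valid_instance m pos atm sg"
    and "(gd_step m pos atm sg)\<^sup>*\<^sup>* gd_init c"
    and "u < 2*m"
    and "atm u \<le> time c"
  shows "(\<Sum>S\<in>{S. S \<subseteq> arr c \<and> u \<in> S}. yv c S) \<le> time c - atm u
       \<and> (u \<notin> matched c \<longrightarrow> (\<Sum>S\<in>{S. S \<subseteq> arr c \<and> u \<in> S}. yv c S) = time c - atm u)"
proof -
  have "\<forall>v<2*m. 0 \<le> atm v" using assms(1) unfolding valid_instance_def by blast
  then have I: "inv m atm c" using assms(2) by (intro inv_reach)
  show ?thesis
  proof (cases "u \<in> arr c")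
    case True
    then show ?thesis using invD7[OF I] unfolding F_def by blast
  next
    case False
    have e: "{S. S \<subseteq> arr c \<and> u \<in> S} = {}" using False by auto
    have "time c \<le> atm u" using invD4[OF I] False assms(3) by blast
    then show ?thesis unfolding e using assms(4) by simp
  qed
qed

end
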